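(* Let $G$ be a simple, undirected, connected graph on $n$ vertices. Then the cat can localise the mouse up to distance $\sqrt{32n}$ by time $\sqrt{2n}$ on $G$; that is, there is a cat strategy such that for every admissible mouse sequence $(m_i)$ there is some $i\le\sqrt{2n}$ with $\mathrm{rad}_G(M_i)\le\sqrt{32n}$.
   Context: The Cat and Mouse game on a simple, undirected, connected graph $G$ with $n$ vertices proceeds in time steps $i=1,2,\dots$. The mouse occupies vertices $m_1,m_2,\dots$, where for $i\ge2$, $m_i$ equals $m_{i-1}$ or is a neighbour of $m_{i-1}$. At time $i$ the cat tests an arbitrary vertex $c_i$; for $i\ge2$ it is told $b_i=1$ if $d(c_i,m_i)\le d(c_{i-1},m_{i-1})$ and $b_i=0$ otherwise ($d$ = graph distance). A cat strategy is $(c_1,c_2,f)$ with $f:\bigcup_{i\in\mathbb N}\{0,1\}^i\to V(G)$ and $c_i=f(b_2,\dots,b_{i-1})$ for $i\ge3$ (deterministic, fixed in advance). $M_i$ is the set of vertices $v$ for which there exist $\tilde m_1,\dots,\tilde m_i$ with $\tilde m_i=v$, each $\tilde m_j$ in the closed neighbourhood of $\tilde m_{j-1}$, and for each $2\le j\le i$: $d(c_j,\tilde m_j)\le d(c_{j-1},\tilde m_{j-1})$ iff $b_j=1$. $\mathrm{rad}_G(W)=\min_{v\in V(G)}\max_{w\in W}d(v,w)$. The cat can localise the mouse up to distance $d$ within (by) time $t$ if there is a cat strategy such that, for every admissible mouse sequence, some $i\le t$ satisfies $\mathrm{rad}_G(M_i)\le d$. *)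

theory Defs
  imports Complex_Main
begin

text \<open>Graphs: vertex set V, adjacency relation E. Vertices of the mouse
 sequence and the cat's tests are indexed from time 1.\<close>

definition simple_graph :: "'a set \<Rightarrow> ('a \<Rightarrow> 'a \<Rightarrow> bool) \<Rightarrow> bool" where
  "simple_graph V E \<longleftrightarrow> (\<forall>u v. E u v \<longrightarrow> u \<in> V \<and> v \<in> V) \<and>
     (\<forall>u v. E u v \<longrightarrow> E v u) \<and> (\<forall>u. \<not> E u u)"

fun reach :: "('a \<Rightarrow> 'a \<Rightarrow> bool) \<Rightarrow> nat \<Rightarrow> 'a \<Rightarrow> 'a \<Rightarrow> bool" where
  "reach E 0 u v = (u = v)"
| "reach E (Suc k) u v = (\<exists>w. E u w \<and> reach E k w v)"

definition connected_graph :: "'a set \<Rightarrow> ('a \<Rightarrow> 'a \<Rightarrow> bool) \<Rightarrow> bool" where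
  "connected_graph V E \<longleftrightarrow> (\<forall>u\<in>V. \<forall>v\<in>V. \<exists>k. reach E k u v)"

definition gdist :: "('a \<Rightarrow> 'a \<Rightarrow> bool) \<Rightarrow> 'a \<Rightarrow> 'a \<Rightarrow> nat" where
  "gdist E u v = (LEAST k. reach E k u v)"

definition rad :: "'a set \<Rightarrow> ('a \<Rightarrow> 'a \<Rightarrow> bool) \<Rightarrow> 'a set \<Rightarrow> nat" where
  "rad V E W = Min ((\<lambda>v. Max ((\<lambda>w. gdist E v w) ` W)) ` V)"

definition mouse_seq :: "'a set \<Rightarrow> ('a \<Rightarrow> 'a \<Rightarrow> bool) \<Rightarrow> (nat \<Rightarrow> 'a) \<Rightarrow> bool" where
  "mouse_seq V E m \<longleftrightarrow> (\<forall>i\<ge>1. m i \<in> V) \<and>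
     (\<forall>i\<ge>2. m i = m (i - 1) \<or> E (m (i - 1)) (m i))"

text \<open>Position tested at time i, given the list of answers [b_2, ..., b_(i-1)].\<close>
definition catpos :: "'a \<Rightarrow> 'a \<Rightarrow> (bool list \<Rightarrow> 'a) \<Rightarrow> bool list \<Rightarrow> nat \<Rightarrow> 'a" where
  "catpos c1 c2 f bs i = (if i = 1 then c1 else if i = 2 then c2 else f bs)"

text \<open>hist k = [b_2, ..., b_k] (the answers received up to time k).\<close>
fun hist :: "('a \<Rightarrow> 'a \<Rightarrow> bool) \<Rightarrow> 'a \<Rightarrow> 'a \<Rightarrow> (bool list \<Rightarrow> 'a) \<Rightarrow> (nat \<Rightarrow> 'a) \<Rightarrow> nat \<Rightarrow> bool list" where
  "hist E c1 c2 f m 0 = []"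
| "hist E c1 c2 f m (Suc 0) = []"
| "hist E c1 c2 f m (Suc (Suc k)) =
     hist E c1 c2 f m (Suc k) @
     [gdist E (catpos c1 c2 f (hist E c1 c2 f m (Suc k)) (Suc (Suc k))) (m (Suc (Suc k)))
       \<le> gdist E (catpos c1 c2 f (hist E c1 c2 f m k) (Suc k)) (m (Suc k))]"

definition cat_c :: "('a \<Rightarrow> 'a \<Rightarrow> bool) \<Rightarrow> 'a \<Rightarrow> 'a \<Rightarrow> (bool list \<Rightarrow> 'a) \<Rightarrow> (nat \<Rightarrow> 'a) \<Rightarrow> nat \<Rightarrow> 'a" where
  "cat_c E c1 c2 f m i = catpos c1 c2 f (hist E c1 c2 f m (i - 1)) i"

definition cat_b :: "('a \<Rightarrow> 'a \<Rightarrow> bool) \<Rightarrow> 'a \<Rightarrow> 'a \<Rightarrow> (bool list \<Rightarrow> 'a) \<Rightarrow> (nat \<Rightarrow> 'a) \<Rightarrow> nat \<Rightarrow> bool" where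
  "cat_b E c1 c2 f m j =
     (gdist E (cat_c E c1 c2 f m j) (m j) \<le> gdist E (cat_c E c1 c2 f m (j - 1)) (m (j - 1)))"

definition Mset :: "'a set \<Rightarrow> ('a \<Rightarrow> 'a \<Rightarrow> bool) \<Rightarrow> 'a \<Rightarrow> 'a \<Rightarrow> (bool list \<Rightarrow> 'a) \<Rightarrow> (nat \<Rightarrow> 'a) \<Rightarrow> nat \<Rightarrow> 'a set" where
  "Mset V E c1 c2 f m i = {v. \<exists>mt :: nat \<Rightarrow> 'a. mt i = v \<and>
      (\<forall>j\<in>{1..i}. mt j \<in> V) \<and>
      (\<forall>j\<in>{2..i}. mt j = mt (j - 1) \<or> E (mt (j - 1)) (mt j)) \<and>
      (\<forall>j\<in>{2..i}. (gdist E (cat_c E c1 c2 f m j) (mt j)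
                     \<le> gdist E (cat_c E c1 c2 f m (j - 1)) (mt (j - 1))) = cat_b E c1 c2 f m j)}"

end

theory Submission
  imports Defs
begin

lemma reach_V: "simple_graph V E \<Longrightarrow> u \<in> V \<Longrightarrow> reach E k u v \<Longrightarrow> v \<in> V"
  by (induction k arbitrary: u) (auto simp: simple_graph_def)

lemma reach_trans: "reach E a u v \<Longrightarrow> reach E b v w \<Longrightarrow> reach E (a+b) u w"
  by (induction a arbitrary: u) auto

lemma reach_snoc: "reach E (Suc k) u v = (\<exists>w. reach E k u w \<and> E w v)"
  by (induction k arbitrary: u) auto

lemma reach_sym: "simple_graph V E \<Longrightarrow> reach E k u v \<Longrightarrow> reach E k v u"
proof (induction k arbitrary: u v)
  case 0 then show ?case by simp
next
  case (Suc k)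
  then obtain w where "E u w" "reach E k w v" by auto
  then have "reach E k v w" using Suc by blast
  moreover have "E w u" using \<open>E u w\<close> Suc.prems(1) by (auto simp: simple_graph_def)
  ultimately have "\<exists>w. reach E k v w \<and> E w u" by blast
  then show ?case by (simp only: reach_snoc)
qed

lemma reach_split: "reach E k u v \<Longrightarrow> s \<le> k \<Longrightarrow> \<exists>z. reach E s u z \<and> reach E (k-s) z v"
proof (induction s arbitrary: u k)
  case 0 then show ?case by auto
next
  case (Suc s)
  then obtain k' where k: "k = Suc k'" by (cases k) auto
  with Suc.prems obtain w where "E u w" "reach E k' w v" by auto
  have "s \<le> k'" using Suc.prems k by simp
  with Suc.IH \<open>reach E k' w v\<close> obtain z where "reach E s w z" "reach E (k'-s) z v" by auto
  then show ?case using \<open>E u w\<close> k by auto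
qed

lemma gdist_le: "reach E k u v \<Longrightarrow> gdist E u v \<le> k"
  unfolding gdist_def by (rule Least_le)

lemma gdist_reach: "reach E k u v \<Longrightarrow> reach E (gdist E u v) u v"
  unfolding gdist_def by (rule LeastI)

lemma gdist_self: "gdist E u u = 0"
  using gdist_le[of E 0 u u] by simp

context
  fixes V and E :: "'a \<Rightarrow> 'a \<Rightarrow> bool"
  assumes sg: "simple_graph V E" and cg: "connected_graph V E"
begin

lemma conn: "u \<in> V \<Longrightarrow> v \<in> V \<Longrightarrow> reach E (gdist E u v) u v"
proof -
  assume a: "u \<in> V" "v \<in> V"
  then obtain k where "reach E k u v" using cg unfolding connected_graph_def by blast
  then show ?thesis by (rule gdist_reach)
qed

lemma gdist_tri: "u \<in> V \<Longrightarrow> v \<in> V \<Longrightarrow> w \<in> V \<Longrightarrow> gdist E u w \<le> gdist E u v + gdist E v w"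
proof -
  assume a: "u \<in> V" "v \<in> V" "w \<in> V"
  show ?thesis using gdist_le[OF reach_trans[OF conn[OF a(1,2)] conn[OF a(2,3)]]] .
qed

lemma gdist_sym: "u \<in> V \<Longrightarrow> v \<in> V \<Longrightarrow> gdist E u v = gdist E v u"
proof -
  assume a: "u \<in> V" "v \<in> V"
  have "gdist E u v \<le> gdist E v u" by (rule gdist_le[OF reach_sym[OF sg conn[OF a(2,1)]]])
  moreover have "gdist E v u \<le> gdist E u v" by (rule gdist_le[OF reach_sym[OF sg conn[OF a(1,2)]]])
  ultimately show ?thesis by simp
qed

lemma gdist_step: "u \<in> V \<Longrightarrow> v \<in> V \<Longrightarrow> w = v \<or> E v w \<Longrightarrow> gdist E u w \<le> gdist E u v + 1"
proof -
  assume a: "u \<in> V" "v \<in> V" "w = v \<or> E v w"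
  have "reach E 1 v w \<or> w = v" using a(3) by (cases "w = v") (simp_all add: One_nat_def)
  then show ?thesis
  proof
    assume "reach E 1 v w"
    then have "reach E (gdist E u v + 1) u w" by (rule reach_trans[OF conn[OF a(1,2)]])
    then show ?thesis by (rule gdist_le)
  next
    assume "w = v" then show ?thesis using le_add1[of "gdist E u v" 1] by (simp only:)
  qed
qed


lemma net_exists:
  assumes fin: "finite V" and ne: "V \<noteq> {}"
  shows "\<exists>N. N \<subseteq> V \<and> N \<noteq> {} \<and> (\<forall>v\<in>V. \<exists>q\<in>N. gdist E q v \<le> \<rho>) \<and>
             (\<forall>q\<in>N. \<forall>q'\<in>N. q \<noteq> q' \<longrightarrow> \<rho> < gdist E q q')"
proof -
  define F where "F = {N. N \<subseteq> V \<and> (\<forall>q\<in>N. \<forall>q'\<in>N. q \<noteq> q' \<longrightarrow> \<rho> < gdist E q q')}"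
  have "F \<subseteq> Pow V" unfolding F_def by blast
  then have finF: "finite F" using fin by (meson finite_Pow_iff finite_subset)
  obtain v0 where v0: "v0 \<in> V" using ne by blast
  have "{v0} \<in> F" unfolding F_def using v0 by simp
  then have neF: "card ` F \<noteq> {}" by blast
  have finC: "finite (card ` F)" using finF by simp
  define M where "M = Max (card ` F)"
  have "M \<in> card ` F" unfolding M_def using finC neF by (rule Max_in)
  then obtain N where NF: "N \<in> F" and cN: "card N = M" by blast
  have maxN: "card N' \<le> card N" if "N' \<in> F" for N'
    using cN M_def finC that by simp
  have NV: "N \<subseteq> V" and sep: "\<forall>q\<in>N. \<forall>q'\<in>N. q \<noteq> q' \<longrightarrow> \<rho> < gdist E q q'"
    using NF unfolding F_def by auto
  have finN: "finite N" using NV fin by (rule finite_subset)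
  have cov: "\<exists>q\<in>N. gdist E q v \<le> \<rho>" if vV: "v \<in> V" for v
  proof (rule ccontr)
    assume "\<not> (\<exists>q\<in>N. gdist E q v \<le> \<rho>)"
    then have far: "\<forall>q\<in>N. \<rho> < gdist E q v" by auto
    have vN: "v \<notin> N"
    proof
      assume "v \<in> N"
      then have "\<rho> < gdist E v v" using far by blast
      then show False by (simp add: gdist_self)
    qed
    have far2: "\<forall>q\<in>N. \<rho> < gdist E v q"
    proof
      fix q assume "q \<in> N"
      then have "q \<in> V" "\<rho> < gdist E q v" using NV far by auto
      then show "\<rho> < gdist E v q" using gdist_sym[OF vV] by simp
    qed
    have "insert v N \<in> F" unfolding F_def using NV vV sep far far2 by auto
    then have "card (insert v N) \<le> card N" by (rule maxN)
    moreover have "card (insert v N) = Suc (card N)" using finN vN by simp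
    ultimately show False by simp
  qed
  have "card {v0} \<le> card N" using \<open>{v0} \<in> F\<close> by (rule maxN)
  then have "N \<noteq> {}" by auto
  then show ?thesis using NV cov sep by blast
qed

lemma ball_card:
  assumes fin: "finite V" and pV: "p \<in> V" and yV: "y \<in> V" and ry: "r \<le> gdist E p y"
  shows "r + 1 \<le> card {z\<in>V. gdist E p z \<le> r}"
proof -
  define K where "K = gdist E p y"
  have rK: "reach E K p y" unfolding K_def using conn[OF pV yV] .
  define g where "g s = (SOME z. reach E s p z \<and> reach E (K - s) z y)" for s
  have gs: "reach E s p (g s) \<and> reach E (K - s) (g s) y" if "s \<le> K" for s
  proof -
    have "\<exists>z. reach E s p z \<and> reach E (K - s) z y" using reach_split[OF rK that] .
    then show ?thesis unfolding g_def by (rule someI_ex)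
  qed
  have gd: "g s \<in> V \<and> gdist E p (g s) = s" if "s \<le> K" for s
  proof -
    have r1: "reach E s p (g s)" and r2: "reach E (K - s) (g s) y" using gs[OF that] by auto
    have gV: "g s \<in> V" using reach_V[OF sg pV r1] .
    have a1: "gdist E p (g s) \<le> s" using gdist_le[OF r1] .
    have a2: "gdist E (g s) y \<le> K - s" using gdist_le[OF r2] .
    have a3: "K \<le> gdist E p (g s) + gdist E (g s) y" unfolding K_def using gdist_tri[OF pV gV yV] .
    have "gdist E p (g s) = s" using a1 a2 a3 that by linarith
    then show ?thesis using gV by simp
  qed
  have inj: "inj_on g {0..r}"
  proof (rule inj_onI)
    fix a b assume "a \<in> {0..r}" "b \<in> {0..r}" "g a = g b"
    then have ab: "a \<le> K" "b \<le> K" "g a = g b" using ry unfolding K_def by auto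
    have "gdist E p (g a) = a" using gd[OF ab(1)] by (rule conjunct2)
    moreover have "gdist E p (g b) = b" using gd[OF ab(2)] by (rule conjunct2)
    ultimately show "a = b" using ab(3) by metis
  qed
  have sub: "g ` {0..r} \<subseteq> {z\<in>V. gdist E p z \<le> r}"
  proof
    fix z assume "z \<in> g ` {0..r}"
    then obtain s where "s \<le> r" "z = g s" by auto
    then have sK: "s \<le> K" using ry unfolding K_def by linarith
    show "z \<in> {z\<in>V. gdist E p z \<le> r}" using gd[OF sK] \<open>s \<le> r\<close> \<open>z = g s\<close> by simp
  qed
  have "card {0..r} \<le> card {z\<in>V. gdist E p z \<le> r}"
    using card_inj_on_le[OF inj sub] fin by simp
  then show ?thesis by simp
qed

lemma net_card:
  assumes fin: "finite V" and NV: "N \<subseteq> V"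
    and sep: "\<forall>q\<in>N. \<forall>q'\<in>N. q \<noteq> q' \<longrightarrow> 2 * r < gdist E q q'"
    and two: "2 \<le> card N"
  shows "card N * (r + 1) \<le> card V"
proof -
  define B where "B q = {z\<in>V. gdist E q z \<le> r}" for q
  have finN: "finite N" using NV fin by (rule finite_subset)
  have finB: "\<forall>q\<in>N. finite (B q)" unfolding B_def using fin by auto
  have disj: "\<forall>q\<in>N. \<forall>q'\<in>N. q \<noteq> q' \<longrightarrow> B q \<inter> B q' = {}"
  proof (intro ballI impI)
    fix q q' assume q: "q \<in> N" "q' \<in> N" "q \<noteq> q'"
    show "B q \<inter> B q' = {}"
    proof (rule ccontr)
      assume "B q \<inter> B q' \<noteq> {}"
      then obtain z where z: "z \<in> V" "gdist E q z \<le> r" "gdist E q' z \<le> r" unfolding B_def by auto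
      have qV: "q \<in> V" "q' \<in> V" using q NV by auto
      have "gdist E q q' \<le> gdist E q z + gdist E z q'" using gdist_tri[OF qV(1) z(1) qV(2)] .
      also have "gdist E z q' = gdist E q' z" using gdist_sym[OF z(1) qV(2)] .
      finally have "gdist E q q' \<le> 2 * r" using z by linarith
      then show False using sep q by fastforce
    qed
  qed
  have big: "r + 1 \<le> card (B q)" if qN: "q \<in> N" for q
  proof -
    have "\<exists>q'\<in>N. q' \<noteq> q"
    proof (rule ccontr)
      assume "\<not> (\<exists>q'\<in>N. q' \<noteq> q)"
      then have "N \<subseteq> {q}" by auto
      then have "card N \<le> 1" using card_mono[of "{q}" N] by simp
      then show False using two by simp
    qed
    then obtain q' where q': "q' \<in> N" "q' \<noteq> q" by blast
    have "2 * r < gdist E q q'" using sep qN q' by auto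
    then have "r \<le> gdist E q q'" by simp
    then show ?thesis unfolding B_def using ball_card[OF fin, of q q' r] qN q' NV by auto
  qed
  have "card N * (r + 1) = (\<Sum>q\<in>N. r + 1)" by simp
  also have "\<dots> \<le> (\<Sum>q\<in>N. card (B q))" by (rule sum_mono) (rule big)
  also have "\<dots> = card (\<Union>q\<in>N. B q)" using card_UN_disjoint[OF finN finB disj] by simp
  also have "\<dots> \<le> card V" by (rule card_mono[OF fin]) (auto simp: B_def)
  finally show ?thesis .
qed


end

definition stp :: "'a \<times> bool \<times> 'a list \<Rightarrow> bool \<Rightarrow> 'a \<times> bool \<times> 'a list" where
  "stp s b = (case s of (p, md, rest) \<Rightarrow>
     if md then (case rest of [] \<Rightarrow> (p, True, []) | q # rs \<Rightarrow> if b then (q, True, rs) else (p, False, rs))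
     else (p, True, rest))"

definition nq :: "'a \<times> bool \<times> 'a list \<Rightarrow> 'a" where
  "nq s = (case s of (p, md, rest) \<Rightarrow> if md then (case rest of [] \<Rightarrow> p | q # rs \<Rightarrow> q) else p)"

definition phi :: "'a \<times> bool \<times> 'a list \<Rightarrow> nat" where
  "phi s = (case s of (p, md, rest) \<Rightarrow> 2 * length rest + (if md then 0 else 1))"

lemma phi_stp: "phi (stp s b) \<le> phi s - 1"
proof -
  obtain p md rest where s: "s = (p, md, rest)" by (cases s) auto
  show ?thesis
  proof (cases md)
    case True
    then show ?thesis using s by (cases rest) (simp_all add: stp_def phi_def)
  next
    case False
    then show ?thesis using s by (simp add: stp_def phi_def)
  qed
qed

lemma phi_foldl: "phi (foldl stp s bs) \<le> phi s - length bs"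
proof (induction bs arbitrary: s)
  case Nil then show ?case by simp
next
  case (Cons b bs)
  have "phi (foldl stp s (b # bs)) = phi (foldl stp (stp s b) bs)" by simp
  also have "\<dots> \<le> phi (stp s b) - length bs" by (rule Cons.IH)
  also have "\<dots> \<le> (phi s - 1) - length bs" using phi_stp[of s b] by linarith
  finally show ?case by simp
qed

lemma phi_zero: "phi s = 0 \<Longrightarrow> snd (snd s) = []"
  by (cases s) (auto simp: phi_def)

definition inA :: "'a set \<Rightarrow> 'a \<times> bool \<times> 'a list \<Rightarrow> bool" where
  "inA A s = (fst s \<in> A \<and> set (snd (snd s)) \<subseteq> A)"

lemma inA_stp: "inA A s \<Longrightarrow> inA A (stp s b)"
proof -
  assume a: "inA A s"
  obtain p md rest where s: "s = (p, md, rest)" by (cases s) auto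
  show ?thesis
  proof (cases md)
    case True
    then show ?thesis using s a by (cases rest) (simp_all add: stp_def inA_def)
  next
    case False
    then show ?thesis using s a by (simp add: stp_def inA_def)
  qed
qed

lemma inA_foldl: "inA A s \<Longrightarrow> inA A (foldl stp s bs)"
  by (induction bs arbitrary: s) (simp_all add: inA_stp)

lemma inA_nq: "inA A s \<Longrightarrow> nq s \<in> A"
proof -
  assume a: "inA A s"
  obtain p md rest where s: "s = (p, md, rest)" by (cases s) auto
  show ?thesis using s a by (cases rest) (simp_all add: nq_def inA_def)
qed

lemma len_hist: "length (hist E c1 c2 f m (Suc k)) = k"
proof (induction k)
  case 0 then show ?case by simp
next
  case (Suc k) then show ?case by simp
qed

lemma hist_Suc: "1 \<le> j \<Longrightarrow> hist E c1 c2 f m (Suc j) = hist E c1 c2 f m j @ [cat_b E c1 c2 f m (Suc j)]"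
proof -
  assume "1 \<le> j"
  then obtain k where k: "j = Suc k" by (cases j) auto
  show ?thesis unfolding k by (simp add: cat_b_def cat_c_def)
qed

lemma cat_c_1: "cat_c E c1 c2 f m 1 = c1"
  by (simp add: cat_c_def catpos_def)

lemma cat_c_Suc: "1 \<le> j \<Longrightarrow> c2 = f [] \<Longrightarrow> cat_c E c1 c2 f m (Suc j) = f (hist E c1 c2 f m j)"
proof -
  assume j: "1 \<le> j" and c2: "c2 = f []"
  show ?thesis
  proof (cases "j = 1")
    case True
    then show ?thesis using c2 by (simp add: cat_c_def catpos_def)
  next
    case False
    then show ?thesis using j by (simp add: cat_c_def catpos_def)
  qed
qed


context
  fixes V and E :: "'a \<Rightarrow> 'a \<Rightarrow> bool"
  assumes sg: "simple_graph V E" and cg: "connected_graph V E"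
begin

lemma dist_walk:
  assumes xV: "x \<in> V"
    and mtV: "\<forall>j\<in>{1..i}. mt j \<in> V"
    and mv: "\<forall>j\<in>{2..i}. mt j = mt (j - 1) \<or> E (mt (j - 1)) (mt j)"
  shows "1 \<le> j \<Longrightarrow> j \<le> i \<Longrightarrow> gdist E x (mt j) \<le> gdist E x (mt 1) + (j - 1)"
proof (induction j)
  case 0 then show ?case by simp
next
  case (Suc j)
  show ?case
  proof (cases "j = 0")
    case True then show ?thesis by simp
  next
    case False
    then have j1: "1 \<le> j" by simp
    have ih: "gdist E x (mt j) \<le> gdist E x (mt 1) + (j - 1)" using Suc.IH j1 Suc.prems(2) by simp
    have v1: "mt j \<in> V" using mtV j1 Suc.prems(2) by simp
    have v2: "mt (Suc j) \<in> V" using mtV Suc.prems(2) by simp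
    have m: "mt (Suc j) = mt j \<or> E (mt j) (mt (Suc j))" using mv j1 Suc.prems(2)
      by (metis One_nat_def atLeastAtMost_iff diff_Suc_1 not_less_eq_eq numeral_2_eq_2)
    have "gdist E x (mt (Suc j)) \<le> gdist E x (mt j) + 1" by (rule gdist_step[OF sg cg xV v1 m])
    then show ?thesis using ih j1 by simp
  qed
qed

lemma invariant:
  fixes q0 :: 'a and rs0 :: "'a list" and f :: "bool list \<Rightarrow> 'a"
  assumes s0: "s0 = (q0, True, rs0)"
    and fdef: "f = (\<lambda>bs. nq (foldl stp s0 bs))"
    and c2: "c2 = f []"
    and A: "inA V s0"
    and x: "x = q0 \<or> x \<in> set rs0"
    and mtV: "\<forall>j\<in>{1..i}. mt j \<in> V"
    and mv: "\<forall>j\<in>{2..i}. mt j = mt (j - 1) \<or> E (mt (j - 1)) (mt j)"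
    and cons: "\<forall>j\<in>{2..i}. (gdist E (cat_c E q0 c2 f m j) (mt j)
                     \<le> gdist E (cat_c E q0 c2 f m (j - 1)) (mt (j - 1))) = cat_b E q0 c2 f m j"
    and dx: "gdist E x (mt 1) \<le> \<rho>"
  shows "1 \<le> j \<Longrightarrow> j \<le> i \<Longrightarrow>
    (fst (snd (foldl stp s0 (hist E q0 c2 f m j))) \<longrightarrow> cat_c E q0 c2 f m j = fst (foldl stp s0 (hist E q0 c2 f m j))) \<and>
    (x \<in> set (snd (snd (foldl stp s0 (hist E q0 c2 f m j)))) \<or>
       gdist E (fst (foldl stp s0 (hist E q0 c2 f m j))) (mt j) \<le> \<rho> + j - 1)"
proof (induction j)
  case 0 then show ?case by simp
next
  case (Suc j)
  show ?case
  proof (cases "j = 0")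
    case True
    have h1: "hist E q0 c2 f m (Suc 0) = []" by simp
    have "cat_c E q0 c2 f m 1 = q0" by (rule cat_c_1)
    then show ?thesis using True h1 s0 x dx by auto
  next
    case False
    then have j1: "1 \<le> j" by simp
    define S where "S = foldl stp s0 (hist E q0 c2 f m j)"
    obtain p md rest where S3: "S = (p, md, rest)" by (cases S) auto
    have ih: "(md \<longrightarrow> cat_c E q0 c2 f m j = p) \<and> (x \<in> set rest \<or> gdist E p (mt j) \<le> \<rho> + j - 1)"
      using Suc.IH j1 Suc.prems(2) S3 unfolding S_def by simp
    have inS: "inA V S" unfolding S_def using A by (rule inA_foldl)
    then have pV: "p \<in> V" and restV: "set rest \<subseteq> V" using S3 by (auto simp: inA_def)
    have xV: "x \<in> V" using x A s0 by (auto simp: inA_def)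
    have v1: "mt j \<in> V" using mtV j1 Suc.prems(2) by simp
    have v2: "mt (Suc j) \<in> V" using mtV Suc.prems(2) by simp
    have mvj: "mt (Suc j) = mt j \<or> E (mt j) (mt (Suc j))" using mv j1 Suc.prems(2)
      by (metis One_nat_def atLeastAtMost_iff diff_Suc_1 not_less_eq_eq numeral_2_eq_2)
    have hS: "hist E q0 c2 f m (Suc j) = hist E q0 c2 f m j @ [cat_b E q0 c2 f m (Suc j)]"
      by (rule hist_Suc[OF j1])
    define b where "b = cat_b E q0 c2 f m (Suc j)"
    have S': "foldl stp s0 (hist E q0 c2 f m (Suc j)) = stp S b" unfolding hS S_def b_def by simp
    have cS0: "cat_c E q0 c2 f m (Suc j) = f (hist E q0 c2 f m j)"
    proof (cases "j = 1")
      case True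
      then show ?thesis using c2 by (simp add: cat_c_def catpos_def)
    next
      case False
      then show ?thesis using j1 by (simp add: cat_c_def catpos_def)
    qed
    have cS1: "f (hist E q0 c2 f m j) = nq S" unfolding S_def by (subst fdef) (rule refl)
    have cS: "cat_c E q0 c2 f m (Suc j) = nq S" using cS0 cS1 by simp
    have bdef: "b = (gdist E (nq S) (mt (Suc j)) \<le> gdist E (cat_c E q0 c2 f m j) (mt j))"
    proof -
      have "Suc j \<in> {2..i}" using j1 Suc.prems(2) by simp
      then have "(gdist E (cat_c E q0 c2 f m (Suc j)) (mt (Suc j))
                     \<le> gdist E (cat_c E q0 c2 f m (Suc j - 1)) (mt (Suc j - 1))) = cat_b E q0 c2 f m (Suc j)"
        using cons by blast
      then show ?thesis unfolding b_def cS by simp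
    qed
    have pstep: "gdist E p (mt (Suc j)) \<le> gdist E p (mt j) + 1" by (rule gdist_step[OF sg cg pV v1 mvj])
    have dxj: "gdist E x (mt (Suc j)) \<le> \<rho> + j"
    proof -
      have "gdist E x (mt (Suc j)) \<le> gdist E x (mt 1) + (Suc j - 1)"
        by (rule dist_walk[OF xV mtV mv]) (use Suc.prems in auto)
      then show ?thesis using dx by simp
    qed
    show ?thesis
    proof (cases md)
      case False
      have st: "stp S b = (p, True, rest)" using S3 False by (simp add: stp_def)
      have nqS: "nq S = p" using S3 False by (simp add: nq_def)
      show ?thesis unfolding S' st using cS nqS ih pstep j1 by auto
    next
      case True
      have cj: "cat_c E q0 c2 f m j = p" using ih True by simp
      show ?thesis
      proof (cases rest)
        case Nil
        have st: "stp S b = (p, True, [])" using S3 True Nil by (simp add: stp_def)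
        have nqS: "nq S = p" using S3 True Nil by (simp add: nq_def)
        show ?thesis unfolding S' st using cS nqS ih pstep Nil j1 by auto
      next
        case (Cons q rs)
        have nqS: "nq S = q" using S3 True Cons by (simp add: nq_def)
        have bq: "b = (gdist E q (mt (Suc j)) \<le> gdist E p (mt j))" using bdef nqS cj by simp
        show ?thesis
        proof (cases b)
          case True
          have st: "stp S b = (q, True, rs)" using S3 \<open>md\<close> Cons True by (simp add: stp_def)
          have le: "gdist E q (mt (Suc j)) \<le> gdist E p (mt j)" using bq True by simp
          have "x \<in> set rs \<or> gdist E q (mt (Suc j)) \<le> \<rho> + Suc j - 1"
          proof (cases "x = q")
            case True then show ?thesis using dxj by simp
          next
            case False
            then have "x \<in> set rs \<or> gdist E p (mt j) \<le> \<rho> + j - 1" using ih Cons by simp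
            then show ?thesis using le by auto
          qed
          then show ?thesis unfolding S' st using cS nqS by simp
        next
          case False
          have st: "stp S b = (p, False, rs)" using S3 \<open>md\<close> Cons False by (simp add: stp_def)
          have lt: "gdist E p (mt j) < gdist E q (mt (Suc j))" using bq False by simp
          have "x \<in> set rs \<or> gdist E p (mt (Suc j)) \<le> \<rho> + Suc j - 1"
          proof (cases "x = q")
            case True then show ?thesis using dxj lt pstep by simp
          next
            case False
            then have "x \<in> set rs \<or> gdist E p (mt j) \<le> \<rho> + j - 1" using ih Cons by simp
            then show ?thesis using pstep j1 by auto
          qed
          then show ?thesis unfolding S' st by simp
        qed
      qed
    qed
  qed
qed


lemma strategy_bound:
  assumes fin: "finite V" and qsV: "set qs \<subseteq> V" and qsne: "qs \<noteq> []"
    and cover: "\<forall>v\<in>V. \<exists>q\<in>set qs. gdist E q v \<le> \<rho>"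
    and s0: "s0 = (hd qs, True, tl qs)" and fdef: "f = (\<lambda>bs. nq (foldl stp s0 bs))" and c2: "c2 = f []"
    and ms: "mouse_seq V E m"
    and T: "T = 2 * length qs - 1"
  shows "rad V E (Mset V E (hd qs) c2 f m T) \<le> \<rho> + T - 1"
proof -
  have T1: "1 \<le> T" using T qsne by (cases qs) auto
  define S where "S = foldl stp s0 (hist E (hd qs) c2 f m T)"
  have lh: "length (hist E (hd qs) c2 f m T) = T - 1"
    using len_hist[of E "hd qs" c2 f m "T - 1"] T1 by simp
  have ps0: "phi s0 = T - 1" using s0 T qsne by (cases qs) (auto simp: phi_def)
  have "phi S \<le> phi s0 - length (hist E (hd qs) c2 f m T)" unfolding S_def by (rule phi_foldl)
  then have "phi S = 0" using lh ps0 by simp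
  then have rest0: "snd (snd S) = []" by (rule phi_zero)
  have hdq: "hd qs \<in> set qs" using qsne by simp
  have tlq: "set (tl qs) \<subseteq> set qs" using qsne by (cases qs) auto
  have A: "inA V s0" unfolding inA_def s0 using hdq tlq qsV by auto
  have "inA V S" unfolding S_def using A by (rule inA_foldl)
  then have pV: "fst S \<in> V" by (simp add: inA_def)
  define W where "W = Mset V E (hd qs) c2 f m T"
  have bound: "gdist E (fst S) v \<le> \<rho> + T - 1" if vW: "v \<in> W" for v
  proof -
    obtain mt where mtT: "mt T = v" and mtV: "\<forall>j\<in>{1..T}. mt j \<in> V"
      and mv: "\<forall>j\<in>{2..T}. mt j = mt (j - 1) \<or> E (mt (j - 1)) (mt j)"
      and cons: "\<forall>j\<in>{2..T}. (gdist E (cat_c E (hd qs) c2 f m j) (mt j)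
                     \<le> gdist E (cat_c E (hd qs) c2 f m (j - 1)) (mt (j - 1))) = cat_b E (hd qs) c2 f m j"
      using vW unfolding W_def Mset_def by blast
    have "mt 1 \<in> V" using mtV T1 by simp
    then obtain x where xq: "x \<in> set qs" and dx: "gdist E x (mt 1) \<le> \<rho>" using cover by blast
    have x: "x = hd qs \<or> x \<in> set (tl qs)" using xq qsne by (cases qs) auto
    have "x \<in> set (snd (snd S)) \<or> gdist E (fst S) (mt T) \<le> \<rho> + T - 1"
      using invariant[OF s0 fdef c2 A x mtV mv cons dx T1 order_refl] unfolding S_def by blast
    then show ?thesis using rest0 mtT by simp
  qed
  have mW: "m T \<in> W"
  proof -
    have "\<forall>j\<in>{1..T}. m j \<in> V" using ms unfolding mouse_seq_def by auto
    moreover have "\<forall>j\<in>{2..T}. m j = m (j - 1) \<or> E (m (j - 1)) (m j)" using ms unfolding mouse_seq_def by auto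
    moreover have "\<forall>j\<in>{2..T}. (gdist E (cat_c E (hd qs) c2 f m j) (m j)
                     \<le> gdist E (cat_c E (hd qs) c2 f m (j - 1)) (m (j - 1))) = cat_b E (hd qs) c2 f m j"
      by (simp add: cat_b_def)
    ultimately show ?thesis unfolding W_def Mset_def by blast
  qed
  have WV: "W \<subseteq> V"
  proof
    fix v assume "v \<in> W"
    then obtain mt where "mt T = v" "\<forall>j\<in>{1..T}. mt j \<in> V" unfolding W_def Mset_def by blast
    then show "v \<in> V" using T1 by auto
  qed
  have finW: "finite W" using WV fin by (rule finite_subset)
  have "Max ((\<lambda>w. gdist E (fst S) w) ` W) \<le> \<rho> + T - 1"
    using finW mW bound by (subst Max_le_iff) auto
  moreover have "Min ((\<lambda>v. Max ((\<lambda>w. gdist E v w) ` W)) ` V) \<le> Max ((\<lambda>w. gdist E (fst S) w) ` W)"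
    using fin pV by (intro Min_le) auto
  ultimately show ?thesis unfolding rad_def W_def[symmetric] by linarith
qed

end


theorem theorem1p3:
  fixes V :: "'a set" and E :: "'a \<Rightarrow> 'a \<Rightarrow> bool" and n :: nat
  assumes "finite V" and "V \<noteq> {}" and "card V = n"
    and "simple_graph V E" and "connected_graph V E"
  shows "\<exists>c1 c2 (f :: bool list \<Rightarrow> 'a). c1 \<in> V \<and> c2 \<in> V \<and> (\<forall>bs. bs \<noteq> [] \<longrightarrow> f bs \<in> V) \<and>
    (\<forall>m. mouse_seq V E m \<longrightarrow>
       (\<exists>i. 1 \<le> i \<and> real i \<le> sqrt (2 * real n) \<and>
            real (rad V E (Mset V E c1 c2 f m i)) \<le> sqrt (32 * real n)))"
proof -
  note fin = assms(1) and ne = assms(2) and cV = assms(3) and sg = assms(4) and cg = assms(5)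
  have n1: "1 \<le> n" using fin ne cV card_gt_0_iff[of V] by linarith
  define sq where "sq = sqrt (2 * real n)"
  have sq0: "0 \<le> sq" unfolding sq_def by simp
  define r where "r = nat \<lfloor>sq\<rfloor>"
  have rr: "real r = of_int \<lfloor>sq\<rfloor>" unfolding r_def using sq0 by simp
  have r_le: "real r \<le> sq" using rr by simp
  have r_gt: "sq < real r + 1" using rr by linarith
  have two_n: "2 * n < (r + 1) * (r + 1)"
  proof (rule ccontr)
    assume "\<not> 2 * n < (r + 1) * (r + 1)"
    then have "real ((r + 1) * (r + 1)) \<le> real (2 * n)" by linarith
    then have "(real r + 1)\<^sup>2 \<le> 2 * real n" by (simp add: power2_eq_square algebra_simps)
    then have "real r + 1 \<le> sq" unfolding sq_def by (rule real_le_rsqrt)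
    then show False using r_gt by simp
  qed
  obtain N where NV: "N \<subseteq> V" and Nne: "N \<noteq> {}" and cov: "\<forall>v\<in>V. \<exists>q\<in>N. gdist E q v \<le> 2 * r"
    and sep: "\<forall>q\<in>N. \<forall>q'\<in>N. q \<noteq> q' \<longrightarrow> 2 * r < gdist E q q'"
    using net_exists[OF sg cg fin ne, of "2 * r"] by blast
  have finN: "finite N" using NV fin by (rule finite_subset)
  obtain qs where dq: "distinct qs" and sq_: "set qs = N" using finite_distinct_list[OF finN] by blast
  define k where "k = length qs"
  have ck: "card N = k" unfolding k_def using dq sq_ distinct_card by blast
  have qsne: "qs \<noteq> []" using sq_ Nne by auto
  have k1: "1 \<le> k" unfolding k_def using qsne by (cases qs) auto
  define s0 where "s0 = (hd qs, True, tl qs)"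
  define f where "f = (\<lambda>bs. nq (foldl stp s0 bs))"
  define c2 where "c2 = f []"
  define T where "T = 2 * length qs - 1"
  have qsV: "set qs \<subseteq> V" using sq_ NV by simp
  have cover: "\<forall>v\<in>V. \<exists>q\<in>set qs. gdist E q v \<le> 2 * r" using cov sq_ by simp
  have hdq: "hd qs \<in> set qs" using qsne by simp
  have tlq: "set (tl qs) \<subseteq> set qs" using qsne by (cases qs) auto
  have A: "inA V s0" unfolding inA_def s0_def using hdq tlq qsV by auto
  have fV: "f bs \<in> V" for bs unfolding f_def by (rule inA_nq[OF inA_foldl[OF A]])
  have T1: "1 \<le> T" unfolding T_def using k1 k_def by simp
  have keyT: "real T \<le> sq" and key3: "2 * r + T - 1 \<le> 3 * r"
  proof -
    have "real T \<le> sq \<and> 2 * r + T - 1 \<le> 3 * r"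
    proof (cases "k = 1")
      case True
      then have "T = 1" unfolding T_def k_def by simp
      moreover have "1 \<le> sq" unfolding sq_def using n1 by (intro real_le_rsqrt) simp
      ultimately show ?thesis by simp
    next
      case False
      then have "2 \<le> card N" using k1 ck by simp
      then have "card N * (r + 1) \<le> card V" by (rule net_card[OF sg cg fin NV sep])
      then have "k * (r + 1) \<le> n" using ck cV by simp
      then have "2 * k * (r + 1) < (r + 1) * (r + 1)" using two_n by linarith
      then have "2 * k < r + 1" by (metis mult_less_cancel2)
      then have "T \<le> r" unfolding T_def k_def by simp
      then show ?thesis using r_le by simp
    qed
    then show "real T \<le> sq" "2 * r + T - 1 \<le> 3 * r" by auto
  qed
  have s32: "sqrt (32 * real n) = 4 * sq"
  proof -
    have "sqrt (32 * real n) = sqrt (4\<^sup>2 * (2 * real n))" by simp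
    also have "\<dots> = sqrt (4\<^sup>2) * sqrt (2 * real n)" by (rule real_sqrt_mult)
    also have "sqrt (4\<^sup>2) = (4::real)" by simp
    finally show ?thesis unfolding sq_def .
  qed
  have radb: "real (rad V E (Mset V E (hd qs) c2 f m T)) \<le> sqrt (32 * real n)" if ms: "mouse_seq V E m" for m
  proof -
    have "rad V E (Mset V E (hd qs) c2 f m T) \<le> 2 * r + T - 1"
      by (rule strategy_bound[OF sg cg fin qsV qsne cover s0_def f_def c2_def ms T_def])
    then have "rad V E (Mset V E (hd qs) c2 f m T) \<le> 3 * r" using key3 by linarith
    then have "real (rad V E (Mset V E (hd qs) c2 f m T)) \<le> 3 * real r" by linarith
    also have "\<dots> \<le> 4 * sq" using r_le sq0 by linarith
    finally show ?thesis using s32 by simp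
  qed
  have g1: "hd qs \<in> V" using hdq qsV by auto
  have g2: "c2 \<in> V" unfolding c2_def by (rule fV)
  have g3: "\<forall>bs. bs \<noteq> [] \<longrightarrow> f bs \<in> V" using fV by blast
  have g4: "\<forall>m. mouse_seq V E m \<longrightarrow>
       (\<exists>i. 1 \<le> i \<and> real i \<le> sqrt (2 * real n) \<and>
            real (rad V E (Mset V E (hd qs) c2 f m i)) \<le> sqrt (32 * real n))"
  proof (intro allI impI)
    fix m assume ms: "mouse_seq V E m"
    show "\<exists>i. 1 \<le> i \<and> real i \<le> sqrt (2 * real n) \<and>
            real (rad V E (Mset V E (hd qs) c2 f m i)) \<le> sqrt (32 * real n)"
      using T1 keyT radb[OF ms] unfolding sq_def by blast
  qed
  show ?thesis
    by (rule exI[of _ "hd qs"], rule exI[of _ c2], rule exI[of _ f]) (use g1 g2 g3 g4 in blast)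
qed

end
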